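(* There exist an integer $K\ge1$, signs $\varepsilon_1,\dots,\varepsilon_K\in\{-1,1\}$ and labels $x_{1,k},x_{2,k}\in\{x^+,x^-,x^{\natural+},x^{\natural-}\}$ ($k=1,\dots,K$), such that, setting $\mathcal U(x^+)=\sum_{k=1}^K\varepsilon_k\,x_{1,k}^{\otimes 2}\otimes x_{2,k}^{\otimes2}$ (an order-4 tensor on $\mathbb R^{2n}$, where $x^-=Mx^+$), one has for all $x^+\in\mathbb R^{2n}$ $$f(x^+)=\Big\langle\sum_{i=1}^m(a_i^+)^{\otimes4},\ \mathcal U(x^+)\Big\rangle=c\,\langle\mathcal T,\mathcal U(x^+)\rangle.$$
   Context: Let $n,m\ge 1$, $a_1,\dots,a_m\in\mathbb C^n$ and $x^\natural\in\mathbb C^n$. For $a,b\in\mathbb C^n$ write $\langle a,b\rangle=\sum_{j}a_j\overline{b_j}$. Let $y_i=|\langle a_i,x^\natural\rangle|^2$. For $v\in\mathbb C^n$ put $v^+=(\mathrm{Re}\,v,\mathrm{Im}\,v)\in\mathbb R^{2n}$ and $v^-=Mv^+=(-\mathrm{Im}\,v,\mathrm{Re}\,v)$, where $M=\begin{bmatrix}0&-I_n\\ I_n&0\end{bmatrix}$. The map $x\mapsto x^+$ identifies $\mathbb C^n$ with $\mathbb R^{2n}$. Define $f:\mathbb R^{2n}\to\mathbb R$ by $f(x^+)=\sum_{i=1}^m\big(|\langle a_i,x\rangle|^2-y_i\big)^2$. Fix $\sigma>0$ (in the paper, $\sigma^2=\mathrm{Var}((a_i^+)_1)$ for random measurement vectors),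 set $c=m\sigma^4$ and $\mathcal T=\frac1c\sum_{i=1}^m(a_i^+)^{\otimes4}$. The inner product of order-4 tensors is the sum of entrywise products. *)

theory Defs
  imports Complex_Main
begin

text \<open>Vectors in C^n are functions nat => complex (entries 0..n-1);
 vectors in R^{2n} are functions nat => real (entries 0..2n-1);
 order-4 tensors on R^{2n} are functions on index quadruples.\<close>

definition cinner :: "nat \<Rightarrow> (nat \<Rightarrow> complex) \<Rightarrow> (nat \<Rightarrow> complex) \<Rightarrow> complex" where
  "cinner n a b = (\<Sum>j<n. a j * cnj (b j))"

definition vplus :: "nat \<Rightarrow> (nat \<Rightarrow> complex) \<Rightarrow> nat \<Rightarrow> real" where
  "vplus n v = (\<lambda>j. if j < n then Re (v j) else Im (v (j - n)))"

definition toC :: "nat \<Rightarrow> (nat \<Rightarrow> real) \<Rightarrow> nat \<Rightarrow> complex" where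
  "toC n u = (\<lambda>j. Complex (u j) (u (j + n)))"

text \<open>M = [[0,-I],[I,0]] applied to u in R^{2n}\<close>
definition Mmul :: "nat \<Rightarrow> (nat \<Rightarrow> real) \<Rightarrow> nat \<Rightarrow> real" where
  "Mmul n u = (\<lambda>j. if j < n then - u (j + n) else u (j - n))"

definition meas :: "nat \<Rightarrow> (nat \<Rightarrow> nat \<Rightarrow> complex) \<Rightarrow> (nat \<Rightarrow> complex) \<Rightarrow> nat \<Rightarrow> real" where
  "meas n a xn i = (cmod (cinner n (a i) xn))\<^sup>2"

definition f_loss :: "nat \<Rightarrow> nat \<Rightarrow> (nat \<Rightarrow> nat \<Rightarrow> complex) \<Rightarrow> (nat \<Rightarrow> complex) \<Rightarrow> (nat \<Rightarrow> real) \<Rightarrow> real" where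
  "f_loss n m a xn u = (\<Sum>i<m. ((cmod (cinner n (a i) (toC n u)))\<^sup>2 - meas n a xn i)\<^sup>2)"

type_synonym tensor4 = "nat \<times> nat \<times> nat \<times> nat \<Rightarrow> real"

definition tpow4 :: "(nat \<Rightarrow> real) \<Rightarrow> tensor4" where
  "tpow4 v = (\<lambda>(i,j,k,l). v i * v j * v k * v l)"

definition tsq2 :: "(nat \<Rightarrow> real) \<Rightarrow> (nat \<Rightarrow> real) \<Rightarrow> tensor4" where
  "tsq2 v w = (\<lambda>(i,j,k,l). v i * v j * w k * w l)"

definition tinner :: "nat \<Rightarrow> tensor4 \<Rightarrow> tensor4 \<Rightarrow> real" where
  "tinner N S T = (\<Sum>i<N. \<Sum>j<N. \<Sum>k<N. \<Sum>l<N. S (i,j,k,l) * T (i,j,k,l))"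

datatype label = Xp | Xm | XNp | XNm

fun labvec :: "nat \<Rightarrow> (nat \<Rightarrow> real) \<Rightarrow> (nat \<Rightarrow> complex) \<Rightarrow> label \<Rightarrow> nat \<Rightarrow> real" where
  "labvec n u xn Xp = u"
| "labvec n u xn Xm = Mmul n u"
| "labvec n u xn XNp = vplus n xn"
| "labvec n u xn XNm = Mmul n (vplus n xn)"

definition Utensor :: "nat \<Rightarrow> nat \<Rightarrow> (nat \<Rightarrow> real) \<Rightarrow> (nat \<Rightarrow> label) \<Rightarrow> (nat \<Rightarrow> label)
    \<Rightarrow> (nat \<Rightarrow> complex) \<Rightarrow> (nat \<Rightarrow> real) \<Rightarrow> tensor4" where
  "Utensor n K eps l1 l2 xn u =
     (\<lambda>idx. \<Sum>k<K. eps k * tsq2 (labvec n u xn (l1 k)) (labvec n u xn (l2 k)) idx)"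

definition Ttensor :: "nat \<Rightarrow> nat \<Rightarrow> real \<Rightarrow> (nat \<Rightarrow> nat \<Rightarrow> complex) \<Rightarrow> tensor4" where
  "Ttensor n m c a = (\<lambda>idx. (1 / c) * (\<Sum>i<m. tpow4 (vplus n (a i)) idx))"

end

theory Submission imports Defs begin

definition dotp :: "nat \<Rightarrow> (nat \<Rightarrow> real) \<Rightarrow> (nat \<Rightarrow> real) \<Rightarrow> real" where
  "dotp N v w = (\<Sum>j<N. v j * w j)"

lemma sum_double: "(\<Sum>j<2*n. g (j::nat)) = (\<Sum>j<n. g j) + (\<Sum>j<n. g (j+n)::real)"
proof -
  have "{..<2*n} = {..<n} \<union> {n..<n+n}" by auto
  hence "(\<Sum>j<2*n. g j) = (\<Sum>j<n. g j) + (\<Sum>j\<in>{n..<n+n}. g j)"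
    by (simp add: sum.union_disjoint[symmetric] ivl_disj_int)
  also have "(\<Sum>j\<in>{n..<n+n}. g j) = (\<Sum>j<n. g (j+n))"
    using sum.shift_bounds_nat_ivl[of g 0 n n] by (simp add: lessThan_atLeast0 add.commute)
  finally show ?thesis .
qed

lemma cmod_key: "(cmod (cinner n a (toC n u)))\<^sup>2
   = (dotp (2*n) (vplus n a) u)\<^sup>2 + (dotp (2*n) (vplus n a) (Mmul n u))\<^sup>2"
proof -
  have re: "Re (cinner n a (toC n u)) = dotp (2*n) (vplus n a) u"
    unfolding dotp_def sum_double cinner_def vplus_def toC_def
    by (simp add: Re_sum sum.distrib)
  have im: "Im (cinner n a (toC n u)) = dotp (2*n) (vplus n a) (Mmul n u)"
    unfolding dotp_def sum_double cinner_def vplus_def toC_def Mmul_def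
    by (simp add: Im_sum sum.distrib sum_subtractf sum_negf algebra_simps)
  show ?thesis by (simp add: cmod_power2 re im)
qed

lemma meas_key: "meas n a xn i = (cmod (cinner n (a i) (toC n (vplus n xn))))\<^sup>2"
proof -
  have "cinner n (a i) (toC n (vplus n xn)) = cinner n (a i) xn"
    unfolding cinner_def toC_def vplus_def by (intro sum.cong) auto
  thus ?thesis by (simp add: meas_def)
qed

lemma tinner_lin2: "tinner N S (\<lambda>idx. \<Sum>k<K. e k * T k idx) = (\<Sum>k<K. e k * tinner N S (T k))"
  unfolding tinner_def
  by (simp add: sum_distrib_left sum_distrib_right mult_ac sum.swap[of _ "{..<K}"])

lemma tinner_lin1: "tinner N (\<lambda>idx. \<Sum>i<m. T i idx) U = (\<Sum>i<m. tinner N (T i) U)"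
  unfolding tinner_def
  by (simp add: sum_distrib_left sum_distrib_right mult_ac sum.swap[of _ "{..<m}"])

lemma sq_dot: "(dotp N a p)\<^sup>2 = (\<Sum>i<N. \<Sum>j<N. a i * p i * (a j * p j))"
  unfolding dotp_def power2_eq_square by (simp add: sum_product)

lemma tinner_single: "tinner N (tpow4 a) (tsq2 p q) = (dotp N a p)\<^sup>2 * (dotp N a q)\<^sup>2"
proof -
  have "(dotp N a p)\<^sup>2 * (dotp N a q)\<^sup>2 = (\<Sum>i<N. \<Sum>j<N. \<Sum>k<N. \<Sum>l<N. a i * p i * (a j * p j) * (a k * q k * (a l * q l)))"
    unfolding sq_dot by (simp only: sum_distrib_right) (simp only: sum_distrib_left)
  also have "... = tinner N (tpow4 a) (tsq2 p q)"
    unfolding tinner_def tpow4_def tsq2_def by (simp add: mult_ac)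
  finally show ?thesis by simp
qed


fun lab :: "nat \<Rightarrow> label" where
  "lab 0 = Xp" | "lab (Suc 0) = Xm" | "lab (Suc (Suc 0)) = XNp" | "lab _ = XNm"
fun lsg :: "label \<Rightarrow> real" where
  "lsg Xp = 1" | "lsg Xm = 1" | "lsg XNp = -1" | "lsg XNm = -1"

lemma sum4N: "(\<Sum>k<4*N. F k) = (\<Sum>a<N. \<Sum>b<4. F (4*a+b::nat)::real)"
proof (induction N)
  case 0 then show ?case by simp
next
  case (Suc N)
  have "4 * Suc N = Suc (Suc (Suc (Suc (4*N))))" by simp
  then show ?case using Suc by (simp add: numeral_eq_Suc add.commute add.left_commute)
qed

lemma sum16: "(\<Sum>k<16. lsg (lab (k div 4)) * lsg (lab (k mod 4)) * ((g (lab (k div 4)))\<^sup>2 * (g (lab (k mod 4)))\<^sup>2))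
  = ((g Xp)\<^sup>2 + (g Xm)\<^sup>2 - (g XNp)\<^sup>2 - (g XNm)\<^sup>2)\<^sup>2"
proof -
  have "(\<Sum>k<16. lsg (lab (k div 4)) * lsg (lab (k mod 4)) * ((g (lab (k div 4)))\<^sup>2 * (g (lab (k mod 4)))\<^sup>2))
     = (\<Sum>a<4. \<Sum>b<4. lsg (lab ((4*a+b) div 4)) * lsg (lab ((4*a+b) mod 4)) * ((g (lab ((4*a+b) div 4)))\<^sup>2 * (g (lab ((4*a+b) mod 4)))\<^sup>2))"
    using sum4N[where N=4, of "\<lambda>k. lsg (lab (k div 4)) * lsg (lab (k mod 4)) * ((g (lab (k div 4)))\<^sup>2 * (g (lab (k mod 4)))\<^sup>2)"] by simp
  also have "... = (\<Sum>a<4. \<Sum>b<4. lsg (lab a) * lsg (lab b) * ((g (lab a))\<^sup>2 * (g (lab b))\<^sup>2))"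
    by (intro sum.cong refl) auto
  also have "... = ((g Xp)\<^sup>2 + (g Xm)\<^sup>2 - (g XNp)\<^sup>2 - (g XNm)\<^sup>2)\<^sup>2"
    by (simp add: numeral_eq_Suc power2_eq_square algebra_simps)
  finally show ?thesis .
qed

lemma lsg_pm: "lsg l \<in> {-1, 1}" by (cases l) auto

theorem proposition1:
  fixes n m :: nat and a :: "nat \<Rightarrow> nat \<Rightarrow> complex" and xn :: "nat \<Rightarrow> complex"
    and \<sigma> :: real
  assumes "n \<ge> 1" and "m \<ge> 1" and "\<sigma> > 0"
  shows "\<exists>K::nat. \<exists>eps :: nat \<Rightarrow> real. \<exists>l1 l2 :: nat \<Rightarrow> label.
           K \<ge> 1 \<and> (\<forall>k<K. eps k \<in> {-1, 1}) \<and>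
           (\<forall>u :: nat \<Rightarrow> real.
              f_loss n m a xn u
                = tinner (2*n) (\<lambda>idx. \<Sum>i<m. tpow4 (vplus n (a i)) idx) (Utensor n K eps l1 l2 xn u)
            \<and> tinner (2*n) (\<lambda>idx. \<Sum>i<m. tpow4 (vplus n (a i)) idx) (Utensor n K eps l1 l2 xn u)
                = (real m * \<sigma>^4) * tinner (2*n) (Ttensor n m (real m * \<sigma>^4) a) (Utensor n K eps l1 l2 xn u))"
proof -
  define l1 where "l1 = (\<lambda>k::nat. lab (k div 4))"
  define l2 where "l2 = (\<lambda>k::nat. lab (k mod 4))"
  define eps where "eps = (\<lambda>k. lsg (l1 k) * lsg (l2 k))"
  have c0: "real m * \<sigma>^4 \<noteq> 0" using assms by auto
  have epsok: "\<forall>k<16. eps k \<in> {-1, 1}"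
  proof (intro allI impI)
    fix k
    have "lsg (l1 k) = -1 \<or> lsg (l1 k) = 1" "lsg (l2 k) = -1 \<or> lsg (l2 k) = 1" using lsg_pm by auto
    thus "eps k \<in> {-1, 1}" unfolding eps_def by auto
  qed
  have main: "f_loss n m a xn u
      = tinner (2*n) (\<lambda>idx. \<Sum>i<m. tpow4 (vplus n (a i)) idx) (Utensor n 16 eps l1 l2 xn u)" for u
  proof -
    have "tinner (2*n) (\<lambda>idx. \<Sum>i<m. tpow4 (vplus n (a i)) idx) (Utensor n 16 eps l1 l2 xn u)
       = (\<Sum>k<16. eps k * (\<Sum>i<m. (dotp (2*n) (vplus n (a i)) (labvec n u xn (l1 k)))\<^sup>2
             * (dotp (2*n) (vplus n (a i)) (labvec n u xn (l2 k)))\<^sup>2))"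
      unfolding Utensor_def tinner_lin2 tinner_lin1 tinner_single ..
    also have "... = (\<Sum>i<m. \<Sum>k<16. eps k * ((dotp (2*n) (vplus n (a i)) (labvec n u xn (l1 k)))\<^sup>2
             * (dotp (2*n) (vplus n (a i)) (labvec n u xn (l2 k)))\<^sup>2))"
      by (simp add: sum_distrib_left sum.swap[of _ "{..<m}"])
    also have "... = f_loss n m a xn u"
      unfolding f_loss_def meas_key cmod_key eps_def l1_def l2_def
      by (intro sum.cong refl)
         (simp add: sum16[where g="\<lambda>l. dotp (2*n) (vplus n (a _)) (labvec n u xn l)"] diff_diff_eq)
    finally show ?thesis by simp
  qed
  have sec: "tinner (2*n) (\<lambda>idx. \<Sum>i<m. tpow4 (vplus n (a i)) idx) U
      = (real m * \<sigma>^4) * tinner (2*n) (Ttensor n m (real m * \<sigma>^4) a) U" for U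
    unfolding tinner_def Ttensor_def sum_distrib_left
    by (intro sum.cong refl) (use c0 in \<open>simp add: sum_divide_distrib[symmetric]\<close>)
  show ?thesis
    by (rule exI[of _ 16], rule exI[of _ eps], rule exI[of _ l1], rule exI[of _ l2])
       (use epsok main sec in auto)
qed

end
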